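(* Let $d\geq3$ and let $x_1,\dots,x_{d-1}$ be real numbers with $0<x_i<1$ for all $i$ and $x_i\neq x_j$ for at least one pair $(i,j)$. Let $\Omega$ be the quantum channel with Kraus operators $A_0=\mathrm{diag}(1,x_1,\dots,x_{d-1})$ and, for $m=1,\dots,d-1$, $(A_m)_{ij}=\sqrt{1-x_m^2}\,\delta_{0i}\delta_{mj}$ ($i,j=0,\dots,d-1$), and let $\hat\Omega$ be its dual map, $\hat\Omega(X)=\sum_m A_m^\dagger XA_m$. Let $|\Phi^+\rangle=\frac1{\sqrt d}\sum_{i=0}^{d-1}|ii\rangle$, and let $|\psi'\rangle\in\mathbb{C}^d\otimes\mathbb{C}^d$ be a unit eigenvector of $\rho_{\Phi^+,\hat\Omega}=(\mathcal{I}\otimes\hat\Omega)(|\Phi^+\rangle\langle\Phi^+|)$ corresponding to its largest eigenvalue $\lambda_{\max}(\rho_{\Phi^+,\hat\Omega})$. Then $\lambda_{\max}(\rho_{\Phi^+,\Omega})=\mathbb{F}(\rho_{\psi',\Omega})$, where $\rho_{\Phi^+,\Omega}=(\mathcal{I}\otimes\Omega)(|\Phi^+\rangle\langle\Phi^+|)$ and $\rho_{\psi',\Omega}=(\mathcal{I}\otimes\Omega)(|\psi'\rangle\langle\psi'|)$. Moreover, $|\psi'\rangle$ is not maximally entangled.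
   Context: The singlet fraction of a two-qudit state $\rho$ is $\mathbb{F}(\rho)=\max_{|\Phi\rangle}\langle\Phi|\rho|\Phi\rangle$, the maximum over all maximally entangled states $|\Phi\rangle\in\mathbb{C}^d\otimes\mathbb{C}^d$. *)

theory Defs
  imports "Jordan_Normal_Form.Schur_Decomposition"
begin

text \<open>Kronecker (tensor) product; basis vector |i>|j> of C^p (x) C^q has index i*q + j.\<close>
definition kron :: "complex mat \<Rightarrow> complex mat \<Rightarrow> complex mat" where
  "kron A B = mat (dim_row A * dim_row B) (dim_col A * dim_col B)
     (\<lambda>(i,j). A $$ (i div dim_row B, j div dim_col B) * B $$ (i mod dim_row B, j mod dim_col B))"

definition proj :: "complex vec \<Rightarrow> complex mat" where
  "proj v = mat (dim_vec v) (dim_vec v) (\<lambda>(i,j). v $ i * cnj (v $ j))"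

definition channel :: "nat \<Rightarrow> (nat \<Rightarrow> complex mat) \<Rightarrow> complex mat \<Rightarrow> complex mat" where
  "channel d K X = mat d d (\<lambda>(i,j). \<Sum>m<d. (K m * X * mat_adjoint (K m)) $$ (i,j))"

definition ext_channel :: "nat \<Rightarrow> (nat \<Rightarrow> complex mat) \<Rightarrow> complex mat \<Rightarrow> complex mat" where
  "ext_channel d K \<rho> = mat (d*d) (d*d) (\<lambda>(i,j).
     \<Sum>m<d. (kron (1\<^sub>m d) (K m) * \<rho> * mat_adjoint (kron (1\<^sub>m d) (K m))) $$ (i,j))"

definition kraus :: "nat \<Rightarrow> (nat \<Rightarrow> real) \<Rightarrow> nat \<Rightarrow> complex mat" where
  "kraus d x m = (if m = 0
     then mat d d (\<lambda>(i,j). if i = j then (if i = 0 then 1 else complex_of_real (x i)) else 0)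
     else mat d d (\<lambda>(i,j). if i = 0 \<and> j = m then complex_of_real (sqrt (1 - (x m)^2)) else 0))"

text \<open>Kraus operators of the dual map: A_m^dagger X A_m.\<close>
definition kraus_dual :: "nat \<Rightarrow> (nat \<Rightarrow> real) \<Rightarrow> nat \<Rightarrow> complex mat" where
  "kraus_dual d x m = mat_adjoint (kraus d x m)"

definition phi_plus :: "nat \<Rightarrow> complex vec" where
  "phi_plus d = vec (d*d) (\<lambda>k. if k div d = k mod d then complex_of_real (1 / sqrt (real d)) else 0)"

text \<open>Largest eigenvalue (used for Hermitian matrices, whose eigenvalues are real).\<close>
definition lambda_max :: "complex mat \<Rightarrow> real" where
  "lambda_max A = Max (Re ` {k. eigenvalue A k})"

definition ptrace2 :: "nat \<Rightarrow> complex mat \<Rightarrow> complex mat" where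
  "ptrace2 d \<rho> = mat d d (\<lambda>(i,j). \<Sum>k<d. \<rho> $$ (i*d+k, j*d+k))"

definition max_entangled :: "nat \<Rightarrow> complex vec \<Rightarrow> bool" where
  "max_entangled d v \<longleftrightarrow> dim_vec v = d*d \<and> v \<bullet>c v = 1
      \<and> ptrace2 d (proj v) = complex_of_real (1 / real d) \<cdot>\<^sub>m 1\<^sub>m d"

definition singlet_fraction :: "nat \<Rightarrow> complex mat \<Rightarrow> real" where
  "singlet_fraction d \<rho> = Sup {Re ((\<rho> *\<^sub>v \<Phi>) \<bullet>c \<Phi>) | \<Phi>. max_entangled d \<Phi>}"

end

theory Submission imports Defs begin
lemma adj_eq: "mat_adjoint (A::complex mat) = mat (dim_col A) (dim_row A) (\<lambda>(i,j). cnj (A $$ (j,i)))"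
  by (rule eq_matI) (auto simp: mat_adjoint_def mat_of_rows_def)

lemma sum_split: fixes n d :: nat shows "(\<Sum>k<n*d. f k) = (\<Sum>a<n. \<Sum>b<d. f (a*d+b))"
proof (induction n)
  case 0 then show ?case by simp
next
  case (Suc n)
  have "(\<Sum>k<Suc n*d. f k) = (\<Sum>k<n*d + d. f k)" by (simp add: add.commute)
  also have "\<dots> = (\<Sum>k<n*d. f k) + (\<Sum>k=n*d..<n*d+d. f k)" using sum.atLeastLessThan_concat[of 0 "n*d" "n*d+d" f] by (simp add: atLeast0LessThan)
  also have "(\<Sum>k=n*d..<n*d+d. f k) = (\<Sum>b<d. f (n*d+b))"
    using sum.shift_bounds_nat_ivl[of f 0 "n*d" d] by (simp add: atLeast0LessThan add.commute)
  finally show ?case using Suc by simp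
qed

lemma idx_lt: fixes a b d :: nat assumes "a < d" "b < d" shows "a*d+b < d*d"
proof -
  have "a*d+b < a*d+d" using assms by simp
  also have "\<dots> = (a+1)*d" by simp
  also have "\<dots> \<le> d*d" using assms by (intro mult_right_mono) auto
  finally show ?thesis .
qed

lemma idx_div[simp]: fixes a b d :: nat assumes "b < d" shows "(a*d+b) div d = a"
  using assms by simp
lemma idx_mod[simp]: fixes a b d :: nat assumes "b < d" shows "(a*d+b) mod d = b"
  using assms by simp

lemma kron_carrier: "K \<in> carrier_mat d d \<Longrightarrow> kron (1\<^sub>m d) K \<in> carrier_mat (d*d) (d*d)"
  by (simp add: kron_def)

lemma kron_mult:
  assumes K: "K \<in> carrier_mat d d" and u: "u \<in> carrier_vec (d*d)" and k: "k < d*d"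
  shows "(kron (1\<^sub>m d) K *\<^sub>v u) $ k = (\<Sum>b<d. K $$ (k mod d, b) * u $ (k div d * d + b))"
proof -
  have d: "0 < d" using k by (cases d) auto
  have kd: "k div d < d" using k by (simp add: less_mult_imp_div_less)
  have "(kron (1\<^sub>m d) K *\<^sub>v u) $ k = (\<Sum>j<d*d. kron (1\<^sub>m d) K $$ (k,j) * u $ j)"
    using K u k by (simp add: mult_mat_vec_def scalar_prod_def row_def kron_def atLeast0LessThan)
  also have "\<dots> = (\<Sum>a<d. \<Sum>b<d. kron (1\<^sub>m d) K $$ (k,a*d+b) * u $ (a*d+b))"
    by (rule sum_split)
  also have "\<dots> = (\<Sum>a<d. \<Sum>b<d. (if k div d = a then K $$ (k mod d, b) * u $ (a*d+b) else 0))"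
  proof (rule sum.cong[OF refl], rule sum.cong[OF refl])
    fix a b assume a: "a \<in> {..<d}" and b: "b \<in> {..<d}"
    have ab: "a*d+b < d*d" using a b idx_lt by auto
    show "kron (1\<^sub>m d) K $$ (k,a*d+b) * u $ (a*d+b) = (if k div d = a then K $$ (k mod d, b) * u $ (a*d+b) else 0)"
      using K a b k kd ab by (auto simp: kron_def)
  qed
  also have "\<dots> = (\<Sum>b<d. K $$ (k mod d, b) * u $ (k div d * d + b))"
    using kd by (subst sum.swap) (simp add: sum.delta)
  finally show ?thesis .
qed

lemma proj_conj_entry:
  assumes A: "A \<in> carrier_mat n n" and u: "u \<in> carrier_vec n" and i': "i < n" and j': "j < n"
  shows "(A * proj u * mat_adjoint A) $$ (i,j) = (A *\<^sub>v u) $ i * cnj ((A *\<^sub>v u) $ j)"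
proof -
  have Av: "(A *\<^sub>v u) $ k = (\<Sum>l<n. A $$ (k,l) * u $ l)" if "k < n" for k
    using A u that by (simp add: mult_mat_vec_def scalar_prod_def atLeast0LessThan row_def)
  have AP: "(A * proj u) $$ (i,l) = (A *\<^sub>v u) $ i * cnj (u $ l)" if "l < n" for l
  proof -
    have "(A * proj u) $$ (i,l) = (\<Sum>k<n. A $$ (i,k) * (u $ k * cnj (u $ l)))"
      using A u i' that by (simp add: proj_def scalar_prod_def atLeast0LessThan row_def col_def)
    also have "\<dots> = (A *\<^sub>v u) $ i * cnj (u $ l)"
      by (simp add: Av[OF i'] sum_distrib_right mult.assoc)
    finally show ?thesis .
  qed
  have "(A * proj u * mat_adjoint A) $$ (i,j) = (\<Sum>l<n. (A * proj u) $$ (i,l) * cnj (A $$ (j,l)))"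
    using A u i' j' by (simp add: adj_eq scalar_prod_def proj_def atLeast0LessThan)
  also have "\<dots> = (\<Sum>l<n. (A *\<^sub>v u) $ i * (cnj (A $$ (j,l)) * cnj (u $ l)))"
    by (rule sum.cong) (auto simp: AP)
  also have "\<dots> = (A *\<^sub>v u) $ i * cnj ((A *\<^sub>v u) $ j)"
    by (simp add: Av[OF j'] sum_distrib_left)
  finally show ?thesis .
qed

definition Y :: "nat \<Rightarrow> (nat \<Rightarrow> complex mat) \<Rightarrow> complex vec \<Rightarrow> nat \<Rightarrow> complex vec" where
  "Y d K u m = kron (1\<^sub>m d) (K m) *\<^sub>v u"

lemma ext_proj:
  assumes K: "\<And>m. m < d \<Longrightarrow> K m \<in> carrier_mat d d" and u: "u \<in> carrier_vec (d*d)"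
  shows "ext_channel d K (proj u) = mat (d*d) (d*d) (\<lambda>(i,j). \<Sum>m<d. Y d K u m $ i * cnj (Y d K u m $ j))"
proof -
  have e: "(kron (1\<^sub>m d) (K m) * proj u * mat_adjoint (kron (1\<^sub>m d) (K m))) $$ (i,j) = Y d K u m $ i * cnj (Y d K u m $ j)"
    if "m < d" "i < d*d" "j < d*d" for m i j
    unfolding Y_def by (rule proj_conj_entry[OF kron_carrier[OF K[OF that(1)]] u that(2,3)])
  show ?thesis unfolding ext_channel_def
    by (rule eq_matI) (auto simp: e intro!: sum.cong)
qed

definition ip :: "nat \<Rightarrow> complex vec \<Rightarrow> complex vec \<Rightarrow> complex" where
  "ip n z y = (\<Sum>j<n. z $ j * cnj (y $ j))"

lemma rho_mult:
  assumes z: "z \<in> carrier_vec n" and i: "i < n"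
  shows "(mat n n (\<lambda>(i,j). \<Sum>m<d. W m $ i * cnj (W m $ j)) *\<^sub>v z) $ i = (\<Sum>m<d. W m $ i * ip n z (W m))"
proof -
  have "(mat n n (\<lambda>(i,j). \<Sum>m<d. W m $ i * cnj (W m $ j)) *\<^sub>v z) $ i
     = (\<Sum>j<n. (\<Sum>m<d. W m $ i * cnj (W m $ j)) * z $ j)"
    using z i by (simp add: mult_mat_vec_def scalar_prod_def atLeast0LessThan row_def)
  also have "\<dots> = (\<Sum>j<n. \<Sum>m<d. W m $ i * cnj (W m $ j) * z $ j)"
    by (simp add: sum_distrib_right)
  also have "\<dots> = (\<Sum>m<d. \<Sum>j<n. W m $ i * cnj (W m $ j) * z $ j)"
    by (rule sum.swap)
  also have "\<dots> = (\<Sum>m<d. W m $ i * ip n z (W m))"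
    by (simp add: ip_def sum_distrib_left mult_ac)
  finally show ?thesis .
qed

lemma rho_quad:
  assumes z: "z \<in> carrier_vec n"
  shows "(mat n n (\<lambda>(i,j). \<Sum>m<d. W m $ i * cnj (W m $ j)) *\<^sub>v z) \<bullet>c z = (\<Sum>m<d. of_real ((cmod (ip n z (W m)))\<^sup>2))"
proof -
  have "(mat n n (\<lambda>(i,j). \<Sum>m<d. W m $ i * cnj (W m $ j)) *\<^sub>v z) \<bullet>c z
     = (\<Sum>i<n. (\<Sum>m<d. W m $ i * ip n z (W m)) * cnj (z $ i))"
    unfolding scalar_prod_def using z
    by (intro sum.cong) (auto simp: rho_mult[OF z] simp del: index_mult_mat_vec)
  also have "\<dots> = (\<Sum>i<n. \<Sum>m<d. ip n z (W m) * (cnj (z $ i) * W m $ i))"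
    by (simp add: sum_distrib_right sum_distrib_left mult_ac)
  also have "\<dots> = (\<Sum>m<d. \<Sum>i<n. ip n z (W m) * (cnj (z $ i) * W m $ i))"
    by (rule sum.swap)
  also have "\<dots> = (\<Sum>m<d. ip n z (W m) * cnj (ip n z (W m)))"
    by (simp add: ip_def sum_distrib_left mult_ac)
  also have "\<dots> = (\<Sum>m<d. of_real ((cmod (ip n z (W m)))\<^sup>2))"
    by (simp only: complex_norm_square)
  finally show ?thesis .
qed

definition XX :: "(nat \<Rightarrow> real) \<Rightarrow> nat \<Rightarrow> real" where
  "XX x a = (if a = 0 then 1 else x a)"
definition ss :: "(nat \<Rightarrow> real) \<Rightarrow> nat \<Rightarrow> real" where
  "ss x m = sqrt (1 - (x m)\<^sup>2)"

lemma kraus_carrier: "kraus d x m \<in> carrier_mat d d"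
  by (simp add: kraus_def)
lemma kraus_dual_carrier: "kraus_dual d x m \<in> carrier_mat d d"
  by (simp add: kraus_dual_def adj_eq kraus_def)

lemma kraus0_entry: "b < d \<Longrightarrow> c < d \<Longrightarrow> kraus d x 0 $$ (b,c) = (if c = b then of_real (XX x b) else 0)"
  by (simp add: kraus_def XX_def)
lemma krausm_entry: "0 < m \<Longrightarrow> b < d \<Longrightarrow> c < d \<Longrightarrow>
   kraus d x m $$ (b,c) = (if b = 0 \<and> c = m then of_real (ss x m) else 0)"
  by (simp add: kraus_def ss_def)
lemma kraus_dual0_entry: "b < d \<Longrightarrow> c < d \<Longrightarrow> kraus_dual d x 0 $$ (b,c) = (if c = b then of_real (XX x b) else 0)"
  by (auto simp: kraus_dual_def adj_eq kraus_def XX_def)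
lemma kraus_dualm_entry: "0 < m \<Longrightarrow> b < d \<Longrightarrow> c < d \<Longrightarrow>
   kraus_dual d x m $$ (b,c) = (if c = 0 \<and> b = m then of_real (ss x m) else 0)"
  by (auto simp: kraus_dual_def adj_eq kraus_def ss_def)

lemma sum_delta_mult: "finite A \<Longrightarrow> (\<Sum>c\<in>A. (if c = b then \<alpha> else 0) * f c) = (if b \<in> A then \<alpha> * f b else (0::complex))"
proof -
  assume "finite A"
  have "(\<Sum>c\<in>A. (if c = b then \<alpha> else 0) * f c) = (\<Sum>c\<in>A. if c = b then \<alpha> * f c else 0)"
    by (rule sum.cong) auto
  then show ?thesis using \<open>finite A\<close> by (simp add: sum.delta)
qed

lemma Y_at:
  assumes K: "K m \<in> carrier_mat d d" and u: "u \<in> carrier_vec (d*d)" and a: "a < d" and b: "b < d"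
  shows "Y d K u m $ (a*d+b) = (\<Sum>c<d. K m $$ (b, c) * u $ (a * d + c))"
  unfolding Y_def using kron_mult[OF K u idx_lt[OF a b]] b by simp

lemma Y0:
  assumes u: "u \<in> carrier_vec (d*d)" and a: "a < d" and b: "b < d"
  shows "Y d (kraus d x) u 0 $ (a*d+b) = of_real (XX x b) * u $ (a*d+b)"
    and "Y d (kraus_dual d x) u 0 $ (a*d+b) = of_real (XX x b) * u $ (a*d+b)"
  using b by (simp_all add: Y_at[where K="kraus d x" and m=0, OF kraus_carrier u a b] Y_at[where K="kraus_dual d x" and m=0, OF kraus_dual_carrier u a b]
      kraus0_entry kraus_dual0_entry sum_delta_mult)

lemma Ym:
  assumes u: "u \<in> carrier_vec (d*d)" and a: "a < d" and b: "b < d" and m: "0 < m" "m < d"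
  shows "Y d (kraus d x) u m $ (a*d+b) = (if b = 0 then of_real (ss x m) * u $ (a*d+m) else 0)"
    and "Y d (kraus_dual d x) u m $ (a*d+b) = (if b = m then of_real (ss x m) * u $ (a*d) else 0)"
  using b m by (simp_all add: Y_at[where K="kraus d x" and m=m, OF kraus_carrier u a b] Y_at[where K="kraus_dual d x" and m=m, OF kraus_dual_carrier u a b]
      krausm_entry kraus_dualm_entry sum_delta_mult)

lemma ip_split: "ip (d*d) z w = (\<Sum>a<d. \<Sum>b<d. z $ (a*d+b) * cnj (w $ (a*d+b)))"
  unfolding ip_def by (rule sum_split)

lemma ip_Y0:
  assumes u: "u \<in> carrier_vec (d*d)"
    and hu: "\<And>a b. a < d \<Longrightarrow> b < d \<Longrightarrow> u $ (a*d+b) = (if a = b then c * of_real (g b) else 0)"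
    and K: "K = kraus d x \<or> K = kraus_dual d x"
  shows "ip (d*d) z (Y d K u 0) = cnj c * (\<Sum>a<d. z $ (a*d+a) * of_real (XX x a * g a))"
proof -
  have "ip (d*d) z (Y d K u 0) = (\<Sum>a<d. \<Sum>b<d. z $ (a*d+b) * cnj (Y d K u 0 $ (a*d+b)))"
    by (rule ip_split)
  also have "\<dots> = (\<Sum>a<d. \<Sum>b<d. if b = a then cnj c * (z $ (a*d+a) * of_real (XX x a * g a)) else 0)"
    by (intro sum.cong refl) (use K in \<open>auto simp: Y0[OF u] hu\<close>)
  also have "\<dots> = cnj c * (\<Sum>a<d. z $ (a*d+a) * of_real (XX x a * g a))"
    by (simp add: sum_distrib_left)
  finally show ?thesis .
qed

lemma ip_Ym:
  assumes u: "u \<in> carrier_vec (d*d)"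
    and hu: "\<And>a b. a < d \<Longrightarrow> b < d \<Longrightarrow> u $ (a*d+b) = (if a = b then c * of_real (g b) else 0)"
    and m: "0 < m" "m < d"
  shows "ip (d*d) z (Y d (kraus d x) u m) = cnj c * z $ (m*d) * of_real (ss x m * g m)"
proof -
  have "ip (d*d) z (Y d (kraus d x) u m) = (\<Sum>a<d. \<Sum>b<d. z $ (a*d+b) * cnj (Y d (kraus d x) u m $ (a*d+b)))"
    by (rule ip_split)
  also have "\<dots> = (\<Sum>a<d. \<Sum>b<d. if b = 0 then (if a = m then cnj c * z $ (m*d) * of_real (ss x m * g m) else 0) else 0)"
    by (intro sum.cong refl) (use m in \<open>auto simp: Ym[OF u] hu\<close>)
  also have "\<dots> = cnj c * z $ (m*d) * of_real (ss x m * g m)"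
    using m by simp
  finally show ?thesis .
qed

lemma ip_Ydm:
  assumes u: "u \<in> carrier_vec (d*d)"
    and hu: "\<And>a b. a < d \<Longrightarrow> b < d \<Longrightarrow> u $ (a*d+b) = (if a = b then c * of_real (g b) else 0)"
    and m: "0 < m" "m < d"
  shows "ip (d*d) z (Y d (kraus_dual d x) u m) = cnj c * z $ m * of_real (ss x m * g 0)"
proof -
  have hu0: "u $ (a*d) = (if a = 0 then c * of_real (g 0) else 0)" if "a < d" for a
    using hu[OF that, of 0] m by simp
  have "ip (d*d) z (Y d (kraus_dual d x) u m) = (\<Sum>a<d. \<Sum>b<d. z $ (a*d+b) * cnj (Y d (kraus_dual d x) u m $ (a*d+b)))"
    by (rule ip_split)
  also have "\<dots> = (\<Sum>a<d. \<Sum>b<d. if b = m then (if a = 0 then cnj c * z $ m * of_real (ss x m * g 0) else 0) else 0)"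
    by (intro sum.cong refl) (use m in \<open>auto simp: Ym[OF u] hu0\<close>)
  also have "\<dots> = cnj c * z $ m * of_real (ss x m * g 0)"
    using m by simp
  finally show ?thesis .
qed

lemma sum_0_split: "0 < (d::nat) \<Longrightarrow> (\<Sum>m<d. f m) = f 0 + (\<Sum>m\<in>{1..<d}. f m)"
proof -
  assume "0 < d"
  then have "{..<d} = insert 0 {1..<d}" by auto
  then show ?thesis by simp
qed


lemma Q_kraus:
  assumes u: "u \<in> carrier_vec (d*d)" and d: "0 < d"
    and hu: "\<And>a b. a < d \<Longrightarrow> b < d \<Longrightarrow> u $ (a*d+b) = (if a = b then c * of_real (g b) else 0)"
  shows "(\<Sum>m<d. (cmod (ip (d*d) z (Y d (kraus d x) u m)))\<^sup>2)
    = (cmod c)\<^sup>2 * ((cmod (\<Sum>a<d. z $ (a*d+a) * of_real (XX x a * g a)))\<^sup>2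
        + (\<Sum>m\<in>{1..<d}. (cmod (z $ (m*d)))\<^sup>2 * (ss x m * g m)\<^sup>2))"
proof -
  define KK where "KK = kraus d x"
  have A: "(\<Sum>m\<in>{1..<d}. (cmod (ip (d*d) z (Y d KK u m)))\<^sup>2)
      = (cmod c)\<^sup>2 * (\<Sum>m\<in>{1..<d}. (cmod (z $ (m*d)))\<^sup>2 * (ss x m * g m)\<^sup>2)"
    unfolding sum_distrib_left
    by (intro sum.cong refl) (auto simp: KK_def ip_Ym[OF u hu] norm_mult power_mult_distrib)
  have B: "(cmod (ip (d*d) z (Y d KK u 0)))\<^sup>2 = (cmod c)\<^sup>2 * (cmod (\<Sum>a<d. z $ (a*d+a) * of_real (XX x a * g a)))\<^sup>2"
  proof -
    have "ip (d*d) z (Y d KK u 0) = cnj c * (\<Sum>a<d. z $ (a*d+a) * of_real (XX x a * g a))"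
      unfolding KK_def by (rule ip_Y0[OF u hu]) auto
    then show ?thesis by (simp only: norm_mult power_mult_distrib complex_mod_cnj)
  qed
  show ?thesis
    unfolding KK_def[symmetric] sum_0_split[OF d, of "\<lambda>m. (cmod (ip (d*d) z (Y d KK u m)))\<^sup>2"] A B
    by (simp add: distrib_left)
qed

lemma Q_dual:
  assumes u: "u \<in> carrier_vec (d*d)" and d: "0 < d"
    and hu: "\<And>a b. a < d \<Longrightarrow> b < d \<Longrightarrow> u $ (a*d+b) = (if a = b then c * of_real (g b) else 0)"
  shows "(\<Sum>m<d. (cmod (ip (d*d) z (Y d (kraus_dual d x) u m)))\<^sup>2)
    = (cmod c)\<^sup>2 * ((cmod (\<Sum>a<d. z $ (a*d+a) * of_real (XX x a * g a)))\<^sup>2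
        + (\<Sum>m\<in>{1..<d}. (cmod (z $ m))\<^sup>2 * (ss x m * g 0)\<^sup>2))"
proof -
  define KK where "KK = kraus_dual d x"
  have A: "(\<Sum>m\<in>{1..<d}. (cmod (ip (d*d) z (Y d KK u m)))\<^sup>2)
      = (cmod c)\<^sup>2 * (\<Sum>m\<in>{1..<d}. (cmod (z $ m))\<^sup>2 * (ss x m * g 0)\<^sup>2)"
    unfolding sum_distrib_left
    by (intro sum.cong refl) (auto simp: KK_def ip_Ydm[OF u hu] norm_mult power_mult_distrib)
  have B: "(cmod (ip (d*d) z (Y d KK u 0)))\<^sup>2 = (cmod c)\<^sup>2 * (cmod (\<Sum>a<d. z $ (a*d+a) * of_real (XX x a * g a)))\<^sup>2"
  proof -
    have "ip (d*d) z (Y d KK u 0) = cnj c * (\<Sum>a<d. z $ (a*d+a) * of_real (XX x a * g a))"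
      unfolding KK_def by (rule ip_Y0[OF u hu]) auto
    then show ?thesis by (simp only: norm_mult power_mult_distrib complex_mod_cnj)
  qed
  show ?thesis
    unfolding KK_def[symmetric] sum_0_split[OF d, of "\<lambda>m. (cmod (ip (d*d) z (Y d KK u m)))\<^sup>2"] A B
    by (simp add: distrib_left)
qed

lemma cs_sum: fixes f g :: "nat \<Rightarrow> real"
  shows "(\<Sum>i\<in>A. f i * g i)\<^sup>2 \<le> (\<Sum>i\<in>A. (f i)\<^sup>2) * (\<Sum>i\<in>A. (g i)\<^sup>2)"
proof -
  have "0 \<le> (\<Sum>i\<in>A. \<Sum>j\<in>A. (f i * g j - f j * g i)\<^sup>2)" by (intro sum_nonneg) auto
  also have "\<dots> = (\<Sum>i\<in>A. \<Sum>j\<in>A. (f i)\<^sup>2 * (g j)\<^sup>2 + (f j)\<^sup>2 * (g i)\<^sup>2 - 2 * ((f i * g i) * (f j * g j)))"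
    by (intro sum.cong refl) (simp add: power2_eq_square algebra_simps)
  also have "\<dots> = 2 * ((\<Sum>i\<in>A. (f i)\<^sup>2) * (\<Sum>i\<in>A. (g i)\<^sup>2) - (\<Sum>i\<in>A. f i * g i)\<^sup>2)"
  proof -
    have e1: "(\<Sum>i\<in>A. \<Sum>j\<in>A. (f i)\<^sup>2 * (g j)\<^sup>2) = (\<Sum>i\<in>A. (f i)\<^sup>2) * (\<Sum>i\<in>A. (g i)\<^sup>2)"
      by (simp add: sum_product)
    have e2: "(\<Sum>i\<in>A. \<Sum>j\<in>A. (f j)\<^sup>2 * (g i)\<^sup>2) = (\<Sum>i\<in>A. (f i)\<^sup>2) * (\<Sum>i\<in>A. (g i)\<^sup>2)"
      using sum_product[of "\<lambda>i. (g i)\<^sup>2" A "\<lambda>j. (f j)\<^sup>2" A] by (simp add: mult.commute)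
    have e3: "(\<Sum>i\<in>A. \<Sum>j\<in>A. 2 * ((f i * g i) * (f j * g j))) = 2 * (\<Sum>i\<in>A. f i * g i)\<^sup>2"
      by (simp add: sum_product power2_eq_square sum_distrib_left[symmetric])
    show ?thesis
      by (simp only: sum_subtractf sum.distrib e1 e2 e3) (simp add: algebra_simps)
  qed
  finally show ?thesis by simp
qed

lemma two_sets:
  fixes f :: "nat \<Rightarrow> real"
  assumes nn: "\<And>k. 0 \<le> f k" and P: "finite P" and Q: "finite Q"
    and ip: "inj_on p P" and iq: "inj_on q Q"
    and sp: "p ` P \<subseteq> {..<n}" and sq: "q ` Q \<subseteq> {..<n}"
    and disj: "\<And>i j. i \<in> P \<Longrightarrow> j \<in> Q \<Longrightarrow> p i \<noteq> q j"
  shows "(\<Sum>i\<in>P. f (p i)) + (\<Sum>j\<in>Q. f (q j)) \<le> (\<Sum>k<n. f k)"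
proof -
  have "(\<Sum>i\<in>P. f (p i)) + (\<Sum>j\<in>Q. f (q j)) = sum f (p ` P) + sum f (q ` Q)"
    using ip iq by (simp add: sum.reindex)
  also have "\<dots> = sum f (p ` P \<union> q ` Q)"
    using P Q disj by (intro sum.union_disjoint[symmetric]) auto
  also have "\<dots> \<le> (\<Sum>k<n. f k)"
    using sp sq nn by (intro sum_mono2) auto
  finally show ?thesis .
qed

lemma vec_norm_sq: "z \<bullet>c z = of_real (\<Sum>i<dim_vec z. (cmod (z $ i))\<^sup>2)"
  by (simp add: scalar_prod_def atLeast0LessThan complex_norm_square del: of_real_power)

lemma eig_bound:
  assumes ev: "eigenvalue (mat n n (\<lambda>(i,j). \<Sum>m<d. W m $ i * cnj (W m $ j))) k"
    and bnd: "\<And>z. z \<in> carrier_vec n \<Longrightarrow> (\<Sum>m<d. (cmod (ip n z (W m)))\<^sup>2) \<le> \<mu> * (\<Sum>i<n. (cmod (z$i))\<^sup>2)"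
  shows "Re k \<le> \<mu>"
proof -
  let ?M = "mat n n (\<lambda>(i,j). \<Sum>m<d. W m $ i * cnj (W m $ j))"
  obtain z where z: "z \<in> carrier_vec n" "z \<noteq> 0\<^sub>v n" "?M *\<^sub>v z = k \<cdot>\<^sub>v z"
    using ev unfolding eigenvalue_def eigenvector_def by auto
  define N where "N = (\<Sum>i<n. (cmod (z$i))\<^sup>2)"
  define Q where "Q = (\<Sum>m<d. (cmod (ip n z (W m)))\<^sup>2)"
  obtain i where i: "i < n" "z $ i \<noteq> 0" using z(1,2) by (metis carrier_vecD eq_vecI index_zero_vec(1,2))
  have "0 < N" unfolding N_def using i by (intro sum_pos2[of _ i]) auto
  have "(?M *\<^sub>v z) \<bullet>c z = of_real Q"
    unfolding rho_quad[OF z(1)] Q_def by simp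
  moreover have "(k \<cdot>\<^sub>v z) \<bullet>c z = k * of_real N"
  proof -
    have "(k \<cdot>\<^sub>v z) \<bullet>c z = k * (z \<bullet>c z)"
      using z(1) by (simp add: scalar_prod_def sum_distrib_left mult.assoc)
    then show ?thesis using z(1) by (simp add: vec_norm_sq N_def)
  qed
  ultimately have "k * of_real N = of_real Q" using z(3) by simp
  then have "k = of_real (Q / N)" using \<open>0 < N\<close> by (simp add: field_simps)
  then have "Re k = Q / N" by simp
  also have "\<dots> \<le> \<mu>" using bnd[OF z(1)] \<open>0 < N\<close> unfolding Q_def N_def by (simp add: divide_le_eq)
  finally show ?thesis .
qed

lemma lmax:
  assumes A: "A \<in> carrier_mat n n" and ev: "eigenvalue A (of_real \<mu>)"
    and bnd: "\<And>k. eigenvalue A k \<Longrightarrow> Re k \<le> \<mu>"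
  shows "lambda_max A = \<mu>"
proof -
  have "char_poly A \<noteq> 0" using degree_monic_char_poly[OF A] by auto
  then have "finite {k. poly (char_poly A) k = 0}" by (rule poly_roots_finite)
  then have fin: "finite {k. eigenvalue A k}" using eigenvalue_root_char_poly[OF A] by simp
  show ?thesis unfolding lambda_max_def
    by (rule Max_eqI) (use fin ev bnd in \<open>auto intro!: image_eqI[of _ Re "of_real \<mu>"]\<close>)
qed

lemma key_ineq:
  fixes a b q :: "nat \<Rightarrow> real" and d :: nat
  assumes d: "0 < d" and a0: "a 0 = 1" and q: "\<And>i. i < d \<Longrightarrow> 0 \<le> q i \<and> q i \<le> 1"
    and ab: "\<And>m. 0 < m \<Longrightarrow> m < d \<Longrightarrow> 0 \<le> a m \<and> b m \<le> a m"
  shows "(\<Sum>i<d. a i * q i)\<^sup>2 + (\<Sum>m\<in>{1..<d}. b m * (1 - (q m)\<^sup>2)) \<le> (\<Sum>i<d. a i)\<^sup>2"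
proof -
  define S where "S = (\<Sum>i<d. a i)"
  define T where "T = (\<Sum>i<d. a i * q i)"
  define D where "D = (\<Sum>m\<in>{1..<d}. a m * (1 - q m))"
  define A1 where "A1 = (\<Sum>m\<in>{1..<d}. a m)"
  define A2 where "A2 = (\<Sum>m\<in>{1..<d}. a m * q m)"
  have S: "S = 1 + A1" unfolding S_def A1_def using sum_0_split[OF d, of a] a0 by simp
  have T: "T = q 0 + A2" unfolding T_def A2_def using sum_0_split[OF d, of "\<lambda>i. a i * q i"] a0 by simp
  have Dq: "D = A1 - A2" unfolding D_def A1_def A2_def by (simp add: right_diff_distrib sum_subtractf)
  have A2: "0 \<le> A2" unfolding A2_def using q ab by (intro sum_nonneg) auto
  have A1: "A2 \<le> A1" unfolding A1_def A2_def
  proof (rule sum_mono)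
    fix m assume "m \<in> {1..<d}"
    then have "0 \<le> a m" "q m \<le> 1" using q ab by auto
    then show "a m * q m \<le> a m" by (simp add: mult_left_le)
  qed
  have q0: "0 \<le> q 0" "q 0 \<le> 1" using q[OF d] by auto
  have T0: "0 \<le> T" using T A2 q0 by simp
  have D0: "0 \<le> D" using Dq A1 by simp
  have E: "D \<le> S - T" using S T Dq q0 by simp
  have SD: "0 \<le> S - D" using S Dq A2 by simp
  have two: "2 \<le> 2 * S - D" using S Dq A2 A1 by simp
  have "S\<^sup>2 - T\<^sup>2 = (S - T) * (2 * S - (S - T))" by (simp add: power2_eq_square algebra_simps)
  also have "\<dots> \<ge> D * (2 * S - D)"
  proof -
    have "(S - T) * (2 * S - (S - T)) - D * (2 * S - D) = (S - T - D) * (T + (S - D))"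
      by (simp add: algebra_simps)
    moreover have "0 \<le> (S - T - D) * (T + (S - D))" using E T0 SD by simp
    ultimately show ?thesis by simp
  qed
  finally have 1: "D * (2 * S - D) \<le> S\<^sup>2 - T\<^sup>2" .
  have 2: "2 * D \<le> D * (2 * S - D)" using two D0 by (metis mult.commute mult_left_mono)
  have 3: "(\<Sum>m\<in>{1..<d}. b m * (1 - (q m)\<^sup>2)) \<le> 2 * D"
    unfolding D_def sum_distrib_left
  proof (rule sum_mono)
    fix m assume m: "m \<in> {1..<d}"
    then have qm: "0 \<le> q m" "q m \<le> 1" using q by auto
    have am: "0 \<le> a m" "b m \<le> a m" using ab m by auto
    have "b m * (1 + q m) \<le> a m * (1 + q m)" using am qm by (intro mult_right_mono) auto
    also have "\<dots> \<le> a m * 2" using am qm by (intro mult_left_mono) auto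
    finally have "b m * (1 + q m) * (1 - q m) \<le> a m * 2 * (1 - q m)" using qm by (intro mult_right_mono) auto
    then show "b m * (1 - (q m)\<^sup>2) \<le> 2 * (a m * (1 - q m))" by (simp add: power2_eq_square algebra_simps)
  qed
  show ?thesis using 1 2 3 unfolding S_def[symmetric] T_def[symmetric] by simp
qed

definition SS :: "nat \<Rightarrow> (nat \<Rightarrow> real) \<Rightarrow> real" where
  "SS d x = (\<Sum>a<d. (XX x a)\<^sup>2)"
definition vv :: "nat \<Rightarrow> (nat \<Rightarrow> real) \<Rightarrow> complex vec" where
  "vv d x = vec (d*d) (\<lambda>k. if k div d = k mod d then complex_of_real (XX x (k mod d)) else 0)"

lemma idx_decomp: fixes i d :: nat assumes "i < d*d"
  shows "i = (i div d)*d + i mod d" "i div d < d" "i mod d < d"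
proof -
  have d: "0 < d" using assms by (cases d) auto
  show "i = (i div d)*d + i mod d" by simp
  show "i div d < d" using assms by (simp add: less_mult_imp_div_less)
  show "i mod d < d" using d by simp
qed

lemma pp_carrier: "phi_plus d \<in> carrier_vec (d*d)" by (simp add: phi_plus_def)
lemma vv_carrier: "vv d x \<in> carrier_vec (d*d)" by (simp add: vv_def)

lemma pp_at: "a < d \<Longrightarrow> b < d \<Longrightarrow> phi_plus d $ (a*d+b) = (if a = b then complex_of_real (1 / sqrt (real d)) * of_real 1 else 0)"
  using idx_lt[of a d b] by (simp add: phi_plus_def)
lemma vv_at: "a < d \<Longrightarrow> b < d \<Longrightarrow> vv d x $ (a*d+b) = (if a = b then 1 * of_real (XX x b) else 0)"
  using idx_lt[of a d b] by (simp add: vv_def)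

locale LS =
  fixes d :: nat and x :: "nat \<Rightarrow> real"
  assumes d2: "2 \<le> d" and hx: "\<And>m. 0 < m \<Longrightarrow> m < d \<Longrightarrow> 0 < x m \<and> x m < 1"
begin

lemma d0: "0 < d" using d2 by simp

lemma XX_nonneg: "0 \<le> XX x a" if "a < d" for a
  using hx[of a] that by (cases "a = 0") (auto simp: XX_def)

lemma ss_sq: "0 < m \<Longrightarrow> m < d \<Longrightarrow> (ss x m)\<^sup>2 = 1 - (x m)\<^sup>2"
proof -
  assume m: "0 < m" "m < d"
  then have "(x m)\<^sup>2 \<le> 1" using hx[OF m] by (simp add: abs_square_le_1)
  then show ?thesis by (simp add: ss_def)
qed

lemma SS_eq: "SS d x = 1 + (\<Sum>m\<in>{1..<d}. (x m)\<^sup>2)"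
  unfolding SS_def sum_0_split[OF d0] by (simp add: XX_def)

lemma SS_ge1: "1 \<le> SS d x"
  unfolding SS_eq by (simp add: sum_nonneg)

lemma ss_lt: "0 < m \<Longrightarrow> m < d \<Longrightarrow> (ss x m)\<^sup>2 < SS d x"
proof -
  assume m: "0 < m" "m < d"
  have "0 < (x m)\<^sup>2" using hx[OF m] by simp
  then show ?thesis using ss_sq[OF m] SS_ge1 by linarith
qed

lemma bound_gen:
  assumes iq: "inj_on qf {1..<d}" and sq: "qf ` {1..<d} \<subseteq> {..<d*d}"
    and dj: "\<And>a m. a < d \<Longrightarrow> m \<in> {1..<d} \<Longrightarrow> a*d+a \<noteq> qf m"
  shows "(cmod (\<Sum>a<d. z $ (a*d+a) * of_real (XX x a)))\<^sup>2 + (\<Sum>m\<in>{1..<d}. (cmod (z $ qf m))\<^sup>2 * (ss x m)\<^sup>2)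
      \<le> SS d x * (\<Sum>i<d*d. (cmod (z$i))\<^sup>2)"
proof -
  define A where "A = (\<Sum>a<d. (cmod (z $ (a*d+a)))\<^sup>2)"
  define B where "B = (\<Sum>m\<in>{1..<d}. (cmod (z $ qf m))\<^sup>2)"
  have 1: "cmod (\<Sum>a<d. z $ (a*d+a) * of_real (XX x a)) \<le> (\<Sum>a<d. XX x a * cmod (z $ (a*d+a)))"
    by (rule order_trans[OF norm_sum]) (auto intro!: sum_mono simp: norm_mult XX_nonneg)
  have 2: "(\<Sum>a<d. XX x a * cmod (z $ (a*d+a)))\<^sup>2 \<le> SS d x * A"
    unfolding SS_def A_def by (rule cs_sum)
  have 3: "(cmod (\<Sum>a<d. z $ (a*d+a) * of_real (XX x a)))\<^sup>2 \<le> SS d x * A"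
    using 1 2 by (meson norm_ge_zero order_trans power_mono)
  have 4: "(\<Sum>m\<in>{1..<d}. (cmod (z $ qf m))\<^sup>2 * (ss x m)\<^sup>2) \<le> SS d x * B"
    unfolding B_def sum_distrib_left
  proof (rule sum_mono)
    fix m assume "m \<in> {1..<d}"
    then have "(ss x m)\<^sup>2 \<le> SS d x" using ss_lt[of m] by auto
    then show "(cmod (z $ qf m))\<^sup>2 * (ss x m)\<^sup>2 \<le> SS d x * (cmod (z $ qf m))\<^sup>2"
      by (simp add: mult.commute mult_right_mono)
  qed
  have inj1: "inj_on (\<lambda>a. a*d+a) {..<d}"
  proof (rule inj_onI)
    fix a a' assume "a \<in> {..<d}" "a' \<in> {..<d}" "a*d+a = a'*d+a'"
    then show "a = a'" by (metis idx_div lessThan_iff)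
  qed
  have 5: "A + B \<le> (\<Sum>i<d*d. (cmod (z$i))\<^sup>2)"
    unfolding A_def B_def
    by (rule two_sets[where p="\<lambda>a. a*d+a" and q=qf]) (use inj1 iq sq dj idx_lt in auto)
  have "SS d x * A + SS d x * B \<le> SS d x * (\<Sum>i<d*d. (cmod (z$i))\<^sup>2)"
    using 5 SS_ge1 by (simp add: distrib_left[symmetric])
  then show ?thesis using 3 4 by simp
qed

lemma boundK: "(cmod (\<Sum>a<d. z $ (a*d+a) * of_real (XX x a)))\<^sup>2 + (\<Sum>m\<in>{1..<d}. (cmod (z $ (m*d)))\<^sup>2 * (ss x m)\<^sup>2)
      \<le> SS d x * (\<Sum>i<d*d. (cmod (z$i))\<^sup>2)"
proof (rule bound_gen)
  show "inj_on (\<lambda>m. m*d) {1..<d}" using d0 by (auto intro!: inj_onI)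
  show "(\<lambda>m. m*d) ` {1..<d} \<subseteq> {..<d*d}" using d0 by auto
  show "a*d+a \<noteq> m*d" if "a < d" "m \<in> {1..<d}" for a m
  proof
    assume h: "a*d+a = m*d"
    have "(a*d+a) mod d = (m*d) mod d" using h by simp
    then have "a = 0" using that by simp
    then show False using h that d0 by simp
  qed
qed

lemma boundD: "(cmod (\<Sum>a<d. z $ (a*d+a) * of_real (XX x a)))\<^sup>2 + (\<Sum>m\<in>{1..<d}. (cmod (z $ m))\<^sup>2 * (ss x m)\<^sup>2)
      \<le> SS d x * (\<Sum>i<d*d. (cmod (z$i))\<^sup>2)"
proof (rule bound_gen[where qf="\<lambda>m. m"])
  show "inj_on (\<lambda>m. m) {1..<d}" by simp
  show "(\<lambda>m. m) ` {1..<d} \<subseteq> {..<d*d}" using d0 by (auto simp: less_le_trans[OF _ mult_le_mono1[of 1 d d]])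
  show "a*d+a \<noteq> m" if "a < d" "m \<in> {1..<d}" for a m
  proof
    assume h: "a*d+a = m"
    then have "a = 0" using that idx_div[of a d a] by (metis atLeastLessThan_iff div_less)
    then show False using h that by simp
  qed
qed

end

lemma idx_all: assumes "i < d*d" and "\<And>a b. a < d \<Longrightarrow> b < d \<Longrightarrow> P (a*d+b)" shows "P (i::nat)"
  using assms(2)[OF idx_decomp(2,3)[OF assms(1)]] idx_decomp(1)[OF assms(1)] by simp

context LS begin

definition c0 :: complex where "c0 = complex_of_real (1 / sqrt (real d))"

lemma c0_sq: "c0 * c0 = of_real (1 / real d)" and cnj_c0: "cnj c0 = c0" and cmod_c0: "(cmod c0)\<^sup>2 = 1 / real d"
proof -
  have "sqrt (real d) * sqrt (real d) = real d" using d0 by simp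
  then show "c0 * c0 = of_real (1 / real d)" unfolding c0_def
    by (simp flip: of_real_mult add: field_simps)
  show "cnj c0 = c0" by (simp add: c0_def)
  show "(cmod c0)\<^sup>2 = 1 / real d" unfolding c0_def using d0 by (simp add: norm_divide power_divide)
qed

lemma c0_sq2: "c0 * (c0 * z) = of_real (1 / real d) * z"
  by (simp add: mult.assoc[symmetric] c0_sq)

lemma dim_vv[simp]: "dim_vec (vv d x) = d*d" by (simp add: vv_def)

lemma hpp: "a < d \<Longrightarrow> b < d \<Longrightarrow> phi_plus d $ (a*d+b) = (if a = b then c0 * of_real ((\<lambda>_. 1) b) else 0)"
  using pp_at by (simp add: c0_def)

lemma rhoK: "u \<in> carrier_vec (d*d) \<Longrightarrow> ext_channel d (kraus d x) (proj u)
   = mat (d*d) (d*d) (\<lambda>(i,j). \<Sum>m<d. Y d (kraus d x) u m $ i * cnj (Y d (kraus d x) u m $ j))"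
  by (rule ext_proj) (auto simp: kraus_carrier)
lemma rhoD: "u \<in> carrier_vec (d*d) \<Longrightarrow> ext_channel d (kraus_dual d x) (proj u)
   = mat (d*d) (d*d) (\<lambda>(i,j). \<Sum>m<d. Y d (kraus_dual d x) u m $ i * cnj (Y d (kraus_dual d x) u m $ j))"
  by (rule ext_proj) (auto simp: kraus_dual_carrier)

lemma ip_vv_0:
  assumes K: "K = kraus d x \<or> K = kraus_dual d x"
  shows "ip (d*d) (vv d x) (Y d K (phi_plus d) 0) = c0 * of_real (SS d x)"
proof -
  have "ip (d*d) (vv d x) (Y d K (phi_plus d) 0) = cnj c0 * (\<Sum>a<d. vv d x $ (a*d+a) * of_real (XX x a * 1))"
    by (rule ip_Y0[OF pp_carrier hpp K]) auto
  also have "(\<Sum>a<d. vv d x $ (a*d+a) * of_real (XX x a * 1)) = of_real (SS d x)"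
    unfolding SS_def by (simp add: vv_at power2_eq_square)
  finally show ?thesis by (simp add: cnj_c0)
qed

lemma ev_vvK: "ext_channel d (kraus d x) (proj (phi_plus d)) *\<^sub>v vv d x = of_real (SS d x / d) \<cdot>\<^sub>v vv d x"
proof (rule eq_vecI)
  show "dim_vec (ext_channel d (kraus d x) (proj (phi_plus d)) *\<^sub>v vv d x) = dim_vec (of_real (SS d x / d) \<cdot>\<^sub>v vv d x)"
    by (simp add: rhoK[OF pp_carrier] vv_def)
  fix i assume "i < dim_vec (of_real (SS d x / d) \<cdot>\<^sub>v vv d x)"
  then have i: "i < d*d" by (simp add: vv_def)
  have ipm: "ip (d*d) (vv d x) (Y d (kraus d x) (phi_plus d) m) = 0" if "m \<in> {1..<d}" for m
  proof -
    have "ip (d*d) (vv d x) (Y d (kraus d x) (phi_plus d) m) = cnj c0 * vv d x $ (m*d) * of_real (ss x m * 1)"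
      by (rule ip_Ym[OF pp_carrier hpp]) (use that in auto)
    moreover have "vv d x $ (m*d) = 0" using vv_at[of m d 0 x] that by auto
    ultimately show ?thesis by simp
  qed
  have "(ext_channel d (kraus d x) (proj (phi_plus d)) *\<^sub>v vv d x) $ i
      = (\<Sum>m<d. Y d (kraus d x) (phi_plus d) m $ i * ip (d*d) (vv d x) (Y d (kraus d x) (phi_plus d) m))"
    unfolding rhoK[OF pp_carrier] by (rule rho_mult[OF vv_carrier i])
  also have "\<dots> = Y d (kraus d x) (phi_plus d) 0 $ i * (c0 * of_real (SS d x))"
    unfolding sum_0_split[OF d0] by (simp add: ipm ip_vv_0)
  also have "\<dots> = (of_real (SS d x / d) \<cdot>\<^sub>v vv d x) $ i"
  proof (rule idx_all[OF i])
    fix a b assume a: "a < d" and b: "b < d"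
    show "Y d (kraus d x) (phi_plus d) 0 $ (a*d+b) * (c0 * of_real (SS d x)) = (of_real (SS d x / d) \<cdot>\<^sub>v vv d x) $ (a*d+b)"
      using idx_lt[OF a b] a b
      by (simp add: Y0(1)[OF pp_carrier a b] hpp vv_at mult_ac c0_sq2)
  qed
  finally show "(ext_channel d (kraus d x) (proj (phi_plus d)) *\<^sub>v vv d x) $ i = (of_real (SS d x / d) \<cdot>\<^sub>v vv d x) $ i" .
qed

lemma ev_vvD: "ext_channel d (kraus_dual d x) (proj (phi_plus d)) *\<^sub>v vv d x = of_real (SS d x / d) \<cdot>\<^sub>v vv d x"
proof (rule eq_vecI)
  show "dim_vec (ext_channel d (kraus_dual d x) (proj (phi_plus d)) *\<^sub>v vv d x) = dim_vec (of_real (SS d x / d) \<cdot>\<^sub>v vv d x)"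
    by (simp add: rhoD[OF pp_carrier] vv_def)
  fix i assume "i < dim_vec (of_real (SS d x / d) \<cdot>\<^sub>v vv d x)"
  then have i: "i < d*d" by (simp add: vv_def)
  have ipm: "ip (d*d) (vv d x) (Y d (kraus_dual d x) (phi_plus d) m) = 0" if "m \<in> {1..<d}" for m
  proof -
    have "ip (d*d) (vv d x) (Y d (kraus_dual d x) (phi_plus d) m) = cnj c0 * vv d x $ m * of_real (ss x m * 1)"
      by (rule ip_Ydm[OF pp_carrier hpp]) (use that in auto)
    moreover have "vv d x $ m = 0" using vv_at[of 0 d m x] that by auto
    ultimately show ?thesis by simp
  qed
  have "(ext_channel d (kraus_dual d x) (proj (phi_plus d)) *\<^sub>v vv d x) $ i
      = (\<Sum>m<d. Y d (kraus_dual d x) (phi_plus d) m $ i * ip (d*d) (vv d x) (Y d (kraus_dual d x) (phi_plus d) m))"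
    unfolding rhoD[OF pp_carrier] by (rule rho_mult[OF vv_carrier i])
  also have "\<dots> = Y d (kraus_dual d x) (phi_plus d) 0 $ i * (c0 * of_real (SS d x))"
    unfolding sum_0_split[OF d0] by (simp add: ipm ip_vv_0)
  also have "\<dots> = (of_real (SS d x / d) \<cdot>\<^sub>v vv d x) $ i"
  proof (rule idx_all[OF i])
    fix a b assume a: "a < d" and b: "b < d"
    show "Y d (kraus_dual d x) (phi_plus d) 0 $ (a*d+b) * (c0 * of_real (SS d x)) = (of_real (SS d x / d) \<cdot>\<^sub>v vv d x) $ (a*d+b)"
      using idx_lt[OF a b] a b
      by (simp add: Y0(2)[OF pp_carrier a b] hpp vv_at mult_ac c0_sq2)
  qed
  finally show "(ext_channel d (kraus_dual d x) (proj (phi_plus d)) *\<^sub>v vv d x) $ i = (of_real (SS d x / d) \<cdot>\<^sub>v vv d x) $ i" .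
qed


lemma vv_nz: "vv d x \<noteq> 0\<^sub>v (d*d)"
proof
  assume "vv d x = 0\<^sub>v (d*d)"
  then have "vv d x $ (0*d+0) = 0" using d0 by (simp del: mult_0)
  then show False using vv_at[of 0 d 0 x] d0 by (simp add: XX_def)
qed

lemma lmaxK: "lambda_max (ext_channel d (kraus d x) (proj (phi_plus d))) = SS d x / d"
proof (rule lmax[where n="d*d"])
  show "ext_channel d (kraus d x) (proj (phi_plus d)) \<in> carrier_mat (d*d) (d*d)"
    by (simp add: rhoK[OF pp_carrier])
  show "eigenvalue (ext_channel d (kraus d x) (proj (phi_plus d))) (of_real (SS d x / d))"
    unfolding eigenvalue_def eigenvector_def using ev_vvK vv_nz vv_carrier
    by (intro exI[of _ "vv d x"]) (simp add: rhoK[OF pp_carrier])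
  fix k assume "eigenvalue (ext_channel d (kraus d x) (proj (phi_plus d))) k"
  then show "Re k \<le> SS d x / d" unfolding rhoK[OF pp_carrier]
  proof (rule eig_bound)
    fix z :: "complex vec" assume "z \<in> carrier_vec (d*d)"
    have "(\<Sum>m<d. (cmod (ip (d*d) z (Y d (kraus d x) (phi_plus d) m)))\<^sup>2)
       = (cmod c0)\<^sup>2 * ((cmod (\<Sum>a<d. z $ (a*d+a) * of_real (XX x a * 1)))\<^sup>2
        + (\<Sum>m\<in>{1..<d}. (cmod (z $ (m*d)))\<^sup>2 * (ss x m * 1)\<^sup>2))"
      by (rule Q_kraus[OF pp_carrier d0 hpp]) auto
    also have "\<dots> \<le> (1 / real d) * (SS d x * (\<Sum>i<d*d. (cmod (z$i))\<^sup>2))"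
      unfolding cmod_c0 using boundK[of z] d0 by (intro mult_left_mono) auto
    finally show "(\<Sum>m<d. (cmod (ip (d*d) z (Y d (kraus d x) (phi_plus d) m)))\<^sup>2)
       \<le> SS d x / d * (\<Sum>i<d*d. (cmod (z$i))\<^sup>2)" by simp
  qed
qed

lemma lmaxD: "lambda_max (ext_channel d (kraus_dual d x) (proj (phi_plus d))) = SS d x / d"
proof (rule lmax[where n="d*d"])
  show "ext_channel d (kraus_dual d x) (proj (phi_plus d)) \<in> carrier_mat (d*d) (d*d)"
    by (simp add: rhoD[OF pp_carrier])
  show "eigenvalue (ext_channel d (kraus_dual d x) (proj (phi_plus d))) (of_real (SS d x / d))"
    unfolding eigenvalue_def eigenvector_def using ev_vvD vv_nz vv_carrier
    by (intro exI[of _ "vv d x"]) (simp add: rhoD[OF pp_carrier])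
  fix k assume "eigenvalue (ext_channel d (kraus_dual d x) (proj (phi_plus d))) k"
  then show "Re k \<le> SS d x / d" unfolding rhoD[OF pp_carrier]
  proof (rule eig_bound)
    fix z :: "complex vec" assume "z \<in> carrier_vec (d*d)"
    have "(\<Sum>m<d. (cmod (ip (d*d) z (Y d (kraus_dual d x) (phi_plus d) m)))\<^sup>2)
       = (cmod c0)\<^sup>2 * ((cmod (\<Sum>a<d. z $ (a*d+a) * of_real (XX x a * 1)))\<^sup>2
        + (\<Sum>m\<in>{1..<d}. (cmod (z $ m))\<^sup>2 * (ss x m * 1)\<^sup>2))"
      by (rule Q_dual[OF pp_carrier d0 hpp]) auto
    also have "\<dots> \<le> (1 / real d) * (SS d x * (\<Sum>i<d*d. (cmod (z$i))\<^sup>2))"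
      unfolding cmod_c0 using boundD[of z] d0 by (intro mult_left_mono) auto
    finally show "(\<Sum>m<d. (cmod (ip (d*d) z (Y d (kraus_dual d x) (phi_plus d) m)))\<^sup>2)
       \<le> SS d x / d * (\<Sum>i<d*d. (cmod (z$i))\<^sup>2)" by simp
  qed
qed

end

context LS begin

lemma psi_form:
  assumes psi: "\<psi> \<in> carrier_vec (d*d)"
    and ev: "ext_channel d (kraus_dual d x) (proj (phi_plus d)) *\<^sub>v \<psi> = of_real (SS d x / d) \<cdot>\<^sub>v \<psi>"
    and a: "a < d" and b: "b < d"
  shows "\<psi> $ (a*d+b) = (if a = b then ((\<Sum>a<d. \<psi> $ (a*d+a) * of_real (XX x a)) / of_real (SS d x)) * of_real (XX x b) else 0)"
proof -
  define C where "C = (\<Sum>a<d. \<psi> $ (a*d+a) * of_real (XX x a))"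
  define Yd where "Yd = Y d (kraus_dual d x) (phi_plus d)"
  have i: "a*d+b < d*d" using idx_lt[OF a b] .
  have ip0: "ip (d*d) \<psi> (Yd 0) = c0 * C"
  proof -
    have "ip (d*d) \<psi> (Yd 0) = cnj c0 * (\<Sum>a<d. \<psi> $ (a*d+a) * of_real (XX x a * 1))"
      unfolding Yd_def by (rule ip_Y0[OF pp_carrier hpp]) auto
    then show ?thesis by (simp add: C_def cnj_c0)
  qed
  have ipm: "ip (d*d) \<psi> (Yd m) = c0 * \<psi> $ m * of_real (ss x m)" if "m \<in> {1..<d}" for m
  proof -
    have "ip (d*d) \<psi> (Yd m) = cnj c0 * \<psi> $ m * of_real (ss x m * 1)"
      unfolding Yd_def by (rule ip_Ydm[OF pp_carrier hpp]) (use that in auto)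
    then show ?thesis by (simp add: cnj_c0)
  qed
  have Y0v: "Yd 0 $ (a*d+b) = (if a = b then of_real (XX x b) * c0 else 0)"
    unfolding Yd_def using Y0(2)[OF pp_carrier a b] hpp[OF a b] by simp
  have Ymv: "Yd m $ (a*d+b) = (if b = m then (if a = 0 then of_real (ss x m) * c0 else 0) else 0)"
    if "m \<in> {1..<d}" for m
  proof -
    have "phi_plus d $ (a*d) = (if a = 0 then c0 else 0)" using hpp[OF a, of 0] d0 by simp
    then show ?thesis unfolding Yd_def using Ym(2)[OF pp_carrier a b, of m] that by auto
  qed
  have hsum: "(\<Sum>m\<in>{1..<d}. Yd m $ (a*d+b) * ip (d*d) \<psi> (Yd m))
     = (if a = 0 \<and> 0 < b then of_real (1 / real d) * of_real ((ss x b)\<^sup>2) * \<psi> $ b else 0)"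
  proof -
    have "(\<Sum>m\<in>{1..<d}. Yd m $ (a*d+b) * ip (d*d) \<psi> (Yd m))
       = (\<Sum>m\<in>{1..<d}. if b = m then (if a = 0 then of_real (1 / real d) * of_real ((ss x m)\<^sup>2) * \<psi> $ m else 0) else 0)"
    proof (rule sum.cong[OF refl])
      fix m assume m: "m \<in> {1..<d}"
      have "of_real (ss x m) * c0 * (c0 * \<psi> $ m * of_real (ss x m)) = c0 * (c0 * (of_real ((ss x m)\<^sup>2) * \<psi> $ m))"
        by (simp add: power2_eq_square mult_ac)
      then show "Yd m $ (a*d+b) * ip (d*d) \<psi> (Yd m) = (if b = m then (if a = 0 then of_real (1 / real d) * of_real ((ss x m)\<^sup>2) * \<psi> $ m else 0) else 0)"
        using m by (simp add: Ymv ipm c0_sq2 mult_ac)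
    qed
    also have "\<dots> = (if a = 0 \<and> 0 < b then of_real (1 / real d) * of_real ((ss x b)\<^sup>2) * \<psi> $ b else 0)"
      using b by (auto simp: sum.delta)
    finally show ?thesis .
  qed
  have "(ext_channel d (kraus_dual d x) (proj (phi_plus d)) *\<^sub>v \<psi>) $ (a*d+b)
      = (\<Sum>m<d. Yd m $ (a*d+b) * ip (d*d) \<psi> (Yd m))"
    unfolding rhoD[OF pp_carrier] Yd_def by (rule rho_mult[OF psi i])
  also have "\<dots> = (if a = b then of_real (XX x b) * (of_real (1 / real d) * C) else 0)
       + (if a = 0 \<and> 0 < b then of_real (1 / real d) * of_real ((ss x b)\<^sup>2) * \<psi> $ b else 0)"
    unfolding sum_0_split[OF d0] hsum by (simp add: Y0v ip0 c0_sq2 mult_ac)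
  finally have E: "of_real (SS d x / d) * \<psi> $ (a*d+b) = (if a = b then of_real (XX x b) * (of_real (1 / real d) * C) else 0)
       + (if a = 0 \<and> 0 < b then of_real (1 / real d) * of_real ((ss x b)\<^sup>2) * \<psi> $ b else 0)"
    using ev i psi by simp
  have S0: "SS d x \<noteq> 0" using SS_ge1 by simp
  have dd: "real d \<noteq> 0" using d0 by simp
  show ?thesis
  proof (cases "a = b")
    case True
    then have "of_real (SS d x / d) * \<psi> $ (a*d+b) = of_real (XX x b) * (of_real (1 / real d) * C)"
      using E by auto
    then show ?thesis using True S0 dd by (simp add: C_def field_simps)
  next
    case False
    show ?thesis
    proof (cases "a = 0 \<and> 0 < b")
      case True
      then have "of_real (SS d x / d) * \<psi> $ b = of_real (1 / real d) * of_real ((ss x b)\<^sup>2) * \<psi> $ b"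
        using E False by simp
      then have "of_real (SS d x - (ss x b)\<^sup>2) * \<psi> $ b = 0" using dd
        by (simp add: field_simps)
      moreover have "SS d x - (ss x b)\<^sup>2 \<noteq> 0" using ss_lt[of b] True b by simp
      ultimately have "\<psi> $ b = 0" by (metis mult_eq_0_iff of_real_eq_0_iff)
      then show ?thesis using True False by simp
    next
      case False2: False
      then have "of_real (SS d x / d) * \<psi> $ (a*d+b) = 0" using E False False2 by (simp only: if_False if_not_P) simp
      then show ?thesis using False S0 dd by simp
    qed
  qed
qed

end

lemma row_me:
  assumes me: "max_entangled d \<Phi>" and a: "a < d"
  shows "(\<Sum>b<d. (cmod (\<Phi> $ (a*d+b)))\<^sup>2) = 1 / real d"
proof -
  have dim: "dim_vec \<Phi> = d*d" and pt: "ptrace2 d (proj \<Phi>) = complex_of_real (1 / real d) \<cdot>\<^sub>m 1\<^sub>m d"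
    using me unfolding max_entangled_def by auto
  have "ptrace2 d (proj \<Phi>) $$ (a,a) = (\<Sum>k<d. proj \<Phi> $$ (a*d+k, a*d+k))"
    using a by (simp add: ptrace2_def)
  also have "\<dots> = (\<Sum>k<d. of_real ((cmod (\<Phi> $ (a*d+k)))\<^sup>2))"
    by (intro sum.cong refl) (use a dim idx_lt in \<open>auto simp: proj_def complex_norm_square simp del: of_real_power\<close>)
  finally have "of_real (\<Sum>k<d. (cmod (\<Phi> $ (a*d+k)))\<^sup>2) = (complex_of_real (1 / real d))"
    using pt a by simp
  then show ?thesis using of_real_eq_iff by blast
qed

lemma dim_pp: "dim_vec (phi_plus d) = d*d" by (simp add: phi_plus_def)

context LS begin

lemma pp_me: "max_entangled d (phi_plus d)"
  unfolding max_entangled_def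
proof (intro conjI)
  show "dim_vec (phi_plus d) = d*d" by (simp add: phi_plus_def)
  have "(\<Sum>i<dim_vec (phi_plus d). (cmod (phi_plus d $ i))\<^sup>2) = (\<Sum>a<d. \<Sum>b<d. (cmod (phi_plus d $ (a*d+b)))\<^sup>2)"
    using sum_split[of "\<lambda>i. (cmod (phi_plus d $ i))\<^sup>2" d d] by (simp add: dim_pp)
  also have "\<dots> = (\<Sum>a<d. \<Sum>b<d. if b = a then 1 / real d else 0)"
    by (intro sum.cong refl) (auto simp: hpp cmod_c0)
  also have "\<dots> = 1" using d0 by simp
  finally show "phi_plus d \<bullet>c phi_plus d = 1" by (simp add: vec_norm_sq)
  show "ptrace2 d (proj (phi_plus d)) = complex_of_real (1 / real d) \<cdot>\<^sub>m 1\<^sub>m d"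
  proof (rule eq_matI)
    fix i j assume "i < dim_row (complex_of_real (1 / real d) \<cdot>\<^sub>m 1\<^sub>m d)" "j < dim_col (complex_of_real (1 / real d) \<cdot>\<^sub>m 1\<^sub>m d)"
    then have i: "i < d" and j: "j < d" by auto
    have "ptrace2 d (proj (phi_plus d)) $$ (i,j) = (\<Sum>k<d. phi_plus d $ (i*d+k) * cnj (phi_plus d $ (j*d+k)))"
      using i j by (auto simp: ptrace2_def proj_def dim_pp idx_lt intro!: sum.cong)
    also have "\<dots> = (\<Sum>k<d. if k = i then (if j = i then c0 * c0 else 0) else 0)"
      by (intro sum.cong refl) (use i j in \<open>auto simp: hpp cnj_c0\<close>)
    also have "\<dots> = (complex_of_real (1 / real d) \<cdot>\<^sub>m 1\<^sub>m d) $$ (i,j)"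
      using i j by (simp add: c0_sq)
    finally show "ptrace2 d (proj (phi_plus d)) $$ (i,j) = (complex_of_real (1 / real d) \<cdot>\<^sub>m 1\<^sub>m d) $$ (i,j)" .
  qed (auto simp: ptrace2_def)
qed

lemma val_formula:
  assumes psi: "\<psi> \<in> carrier_vec (d*d)"
    and hpsi: "\<And>a b. a < d \<Longrightarrow> b < d \<Longrightarrow> \<psi> $ (a*d+b) = (if a = b then c * of_real (XX x b) else 0)"
    and Phi: "\<Phi> \<in> carrier_vec (d*d)"
  shows "Re ((ext_channel d (kraus d x) (proj \<psi>) *\<^sub>v \<Phi>) \<bullet>c \<Phi>)
     = (cmod c)\<^sup>2 * ((cmod (\<Sum>a<d. \<Phi> $ (a*d+a) * of_real (XX x a * XX x a)))\<^sup>2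
        + (\<Sum>m\<in>{1..<d}. (cmod (\<Phi> $ (m*d)))\<^sup>2 * (ss x m * XX x m)\<^sup>2))"
proof -
  have "Re ((ext_channel d (kraus d x) (proj \<psi>) *\<^sub>v \<Phi>) \<bullet>c \<Phi>) = (\<Sum>m<d. (cmod (ip (d*d) \<Phi> (Y d (kraus d x) \<psi> m)))\<^sup>2)"
    unfolding rhoK[OF psi] rho_quad[OF Phi] by (simp del: of_real_power)
  also have "\<dots> = (cmod c)\<^sup>2 * ((cmod (\<Sum>a<d. \<Phi> $ (a*d+a) * of_real (XX x a * XX x a)))\<^sup>2
        + (\<Sum>m\<in>{1..<d}. (cmod (\<Phi> $ (m*d)))\<^sup>2 * (ss x m * XX x m)\<^sup>2))"
    by (rule Q_kraus[OF psi d0 hpsi])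
  finally show ?thesis .
qed

end

context LS begin

lemma V_bound:
  assumes me: "max_entangled d \<Phi>"
  shows "(cmod (\<Sum>a<d. \<Phi> $ (a*d+a) * of_real (XX x a * XX x a)))\<^sup>2
        + (\<Sum>m\<in>{1..<d}. (cmod (\<Phi> $ (m*d)))\<^sup>2 * (ss x m * XX x m)\<^sup>2) \<le> (SS d x)\<^sup>2 / d"
proof -
  define p where "p i = cmod (\<Phi> $ (i*d+i))" for i
  define r where "r m = cmod (\<Phi> $ (m*d))" for m
  define a' where "a' i = (XX x i)\<^sup>2" for i
  define b' where "b' m = (ss x m * XX x m)\<^sup>2" for m
  define q where "q i = sqrt (real d) * p i" for i
  have row: "(\<Sum>b<d. (cmod (\<Phi> $ (a*d+b)))\<^sup>2) = 1 / real d" if "a < d" for a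
    by (rule row_me[OF me that])
  have pa: "(p a)\<^sup>2 \<le> 1 / real d" if a: "a < d" for a
  proof -
    have "(p a)\<^sup>2 \<le> (\<Sum>b<d. (cmod (\<Phi> $ (a*d+b)))\<^sup>2)"
      unfolding p_def using a by (intro member_le_sum[of a "{..<d}" "\<lambda>b. (cmod (\<Phi> $ (a*d+b)))\<^sup>2"]) auto
    then show ?thesis using row[OF a] by simp
  qed
  have prm: "(p m)\<^sup>2 + (r m)\<^sup>2 \<le> 1 / real d" if m: "m \<in> {1..<d}" for m
  proof -
    have "(p m)\<^sup>2 + (r m)\<^sup>2 = (\<Sum>b\<in>{m,0}. (cmod (\<Phi> $ (m*d+b)))\<^sup>2)"
      using m by (simp add: p_def r_def)
    also have "\<dots> \<le> (\<Sum>b<d. (cmod (\<Phi> $ (m*d+b)))\<^sup>2)"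
      using m by (intro sum_mono2) auto
    finally show ?thesis using row[of m] m by simp
  qed
  have sq: "(sqrt (real d))\<^sup>2 = real d" by simp
  have qb: "0 \<le> q i \<and> q i \<le> 1" if "i < d" for i
  proof
    show "0 \<le> q i" by (simp add: q_def p_def)
    have "(q i)\<^sup>2 = real d * (p i)\<^sup>2" by (simp add: q_def power_mult_distrib)
    also have "\<dots> \<le> real d * (1 / real d)" using pa[OF that] by (intro mult_left_mono) auto
    also have "\<dots> = 1\<^sup>2" using d0 by simp
    finally show "q i \<le> 1" by (rule power2_le_imp_le) simp
  qed
  have ab: "0 \<le> a' m \<and> b' m \<le> a' m" if "0 < m" "m < d" for m
  proof
    show "0 \<le> a' m" by (simp add: a'_def)
    have "(ss x m)\<^sup>2 \<le> 1" using ss_sq[OF that] by simp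
    then have "(ss x m)\<^sup>2 * (XX x m)\<^sup>2 \<le> 1 * (XX x m)\<^sup>2" by (intro mult_right_mono) auto
    then show "b' m \<le> a' m" by (simp add: a'_def b'_def power_mult_distrib)
  qed
  have K: "(\<Sum>i<d. a' i * q i)\<^sup>2 + (\<Sum>m\<in>{1..<d}. b' m * (1 - (q m)\<^sup>2)) \<le> (\<Sum>i<d. a' i)\<^sup>2"
    by (rule key_ineq[OF d0]) (use qb ab in \<open>auto simp: a'_def XX_def\<close>)
  have SSa: "(\<Sum>i<d. a' i) = SS d x" by (simp add: a'_def SS_def)
  have Kq1: "(\<Sum>i<d. a' i * q i)\<^sup>2 = real d * (\<Sum>i<d. a' i * p i)\<^sup>2"
    by (simp add: q_def sum_distrib_left[symmetric] mult.left_commute[of _ "sqrt (real d)"] power_mult_distrib)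
  have Kq2: "(\<Sum>m\<in>{1..<d}. b' m * (1 - (q m)\<^sup>2)) = real d * (\<Sum>m\<in>{1..<d}. b' m * (1 / real d - (p m)\<^sup>2))"
    unfolding sum_distrib_left
    by (intro sum.cong refl) (use d0 in \<open>simp add: q_def power_mult_distrib field_simps\<close>)
  have V1: "cmod (\<Sum>a<d. \<Phi> $ (a*d+a) * of_real (XX x a * XX x a)) \<le> (\<Sum>i<d. a' i * p i)"
    by (rule order_trans[OF norm_sum]) (auto intro!: sum_mono simp: norm_mult a'_def p_def power2_eq_square)
  have V1': "(cmod (\<Sum>a<d. \<Phi> $ (a*d+a) * of_real (XX x a * XX x a)))\<^sup>2 \<le> (\<Sum>i<d. a' i * p i)\<^sup>2"
    using V1 by (intro power_mono) auto
  have V2: "(\<Sum>m\<in>{1..<d}. (cmod (\<Phi> $ (m*d)))\<^sup>2 * (ss x m * XX x m)\<^sup>2) \<le> (\<Sum>m\<in>{1..<d}. b' m * (1 / real d - (p m)\<^sup>2))"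
  proof (rule sum_mono)
    fix m assume m: "m \<in> {1..<d}"
    have "(r m)\<^sup>2 \<le> 1 / real d - (p m)\<^sup>2" using prm[OF m] by simp
    then have "b' m * (r m)\<^sup>2 \<le> b' m * (1 / real d - (p m)\<^sup>2)" by (intro mult_left_mono) (auto simp: b'_def)
    then show "(cmod (\<Phi> $ (m*d)))\<^sup>2 * (ss x m * XX x m)\<^sup>2 \<le> b' m * (1 / real d - (p m)\<^sup>2)"
      by (simp add: r_def b'_def mult.commute)
  qed
  have "real d * ((\<Sum>i<d. a' i * p i)\<^sup>2 + (\<Sum>m\<in>{1..<d}. b' m * (1 / real d - (p m)\<^sup>2))) \<le> (SS d x)\<^sup>2"
    using K unfolding Kq1 Kq2 SSa by (simp add: distrib_left)
  then have "(\<Sum>i<d. a' i * p i)\<^sup>2 + (\<Sum>m\<in>{1..<d}. b' m * (1 / real d - (p m)\<^sup>2)) \<le> (SS d x)\<^sup>2 / d"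
    using d0 by (simp add: le_divide_eq mult.commute)
  then show ?thesis using V1' V2 by linarith
qed

end

theorem lemma4:
  fixes d :: nat and x :: "nat \<Rightarrow> real" and \<psi> :: "complex vec"
  assumes "d \<ge> 3"
    and "\<And>i. 1 \<le> i \<Longrightarrow> i \<le> d - 1 \<Longrightarrow> 0 < x i \<and> x i < 1"
    and "\<exists>i j. 1 \<le> i \<and> i \<le> d - 1 \<and> 1 \<le> j \<and> j \<le> d - 1 \<and> x i \<noteq> x j"
    and "dim_vec \<psi> = d * d" and "\<psi> \<bullet>c \<psi> = 1"
    and "eigenvector (ext_channel d (kraus_dual d x) (proj (phi_plus d))) \<psi>
           (complex_of_real (lambda_max (ext_channel d (kraus_dual d x) (proj (phi_plus d)))))"
  shows "lambda_max (ext_channel d (kraus d x) (proj (phi_plus d)))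
           = singlet_fraction d (ext_channel d (kraus d x) (proj \<psi>))
         \<and> \<not> max_entangled d \<psi>"
proof -
  note d3 = assms(1) and hx0 = assms(2) and dimpsi = assms(4) and npsi = assms(5) and eig = assms(6)
  interpret LS d x
  proof
    show "2 \<le> d" using d3 by simp
    fix m assume "0 < m" "m < d"
    then show "0 < x m \<and> x m < 1" using hx0[of m] by simp
  qed
  have psi: "\<psi> \<in> carrier_vec (d*d)" using dimpsi by (rule carrier_vecI)
  have ev: "ext_channel d (kraus_dual d x) (proj (phi_plus d)) *\<^sub>v \<psi> = of_real (SS d x / d) \<cdot>\<^sub>v \<psi>"
  proof -
    have "eigenvector (ext_channel d (kraus_dual d x) (proj (phi_plus d))) \<psi> (of_real (SS d x / d))"
      using eig unfolding lmaxD .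
    then show ?thesis unfolding eigenvector_def by blast
  qed
  define C where "C = (\<Sum>a<d. \<psi> $ (a*d+a) * of_real (XX x a))"
  define c where "c = C / of_real (SS d x)"
  have hpsi: "\<psi> $ (a*d+b) = (if a = b then c * of_real (XX x b) else 0)" if "a < d" "b < d" for a b
    using psi_form[OF psi ev that] unfolding c_def C_def by simp
  have rowpsi: "(\<Sum>b<d. (cmod (\<psi> $ (a*d+b)))\<^sup>2) = (cmod c)\<^sup>2 * (XX x a)\<^sup>2" if a: "a < d" for a
  proof -
    have "(\<Sum>b<d. (cmod (\<psi> $ (a*d+b)))\<^sup>2) = (\<Sum>b<d. if b = a then (cmod c)\<^sup>2 * (XX x a)\<^sup>2 else 0)"
      by (intro sum.cong refl) (auto simp: hpsi a norm_mult power_mult_distrib)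
    then show ?thesis using a by simp
  qed
  have "(\<Sum>i<d*d. (cmod (\<psi> $ i))\<^sup>2) = 1"
    using npsi dimpsi unfolding vec_norm_sq by (metis of_real_eq_1_iff)
  moreover have "(\<Sum>i<d*d. (cmod (\<psi> $ i))\<^sup>2) = (cmod c)\<^sup>2 * SS d x"
    unfolding sum_split SS_def sum_distrib_left using rowpsi by simp
  ultimately have cn: "(cmod c)\<^sup>2 = 1 / SS d x" using SS_ge1 by (simp add: field_simps)
  have S0: "0 < SS d x" using SS_ge1 by simp
  define F where "F = {Re ((ext_channel d (kraus d x) (proj \<psi>) *\<^sub>v \<Phi>) \<bullet>c \<Phi>) | \<Phi>. max_entangled d \<Phi>}"
  have "Sup F = SS d x / d"
  proof (rule cSup_eq_maximum)
    have ppv: "Re ((ext_channel d (kraus d x) (proj \<psi>) *\<^sub>v phi_plus d) \<bullet>c phi_plus d) = SS d x / d"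
    proof -
      have z: "(\<Sum>m\<in>{1..<d}. (cmod (phi_plus d $ (m*d)))\<^sup>2 * (ss x m * XX x m)\<^sup>2) = 0"
      proof (intro sum.neutral ballI)
        fix m assume m: "m \<in> {1..<d}"
        then have "phi_plus d $ (m*d+0) = 0" using hpp[of m 0] d0 by auto
        then show "(cmod (phi_plus d $ (m*d)))\<^sup>2 * (ss x m * XX x m)\<^sup>2 = 0" by simp
      qed
      have s: "(\<Sum>a<d. phi_plus d $ (a*d+a) * of_real (XX x a * XX x a)) = c0 * of_real (SS d x)"
        unfolding SS_def by (simp add: hpp sum_distrib_left power2_eq_square)
      have cs: "(cmod (c0 * of_real (SS d x)))\<^sup>2 = (SS d x)\<^sup>2 / d"
        using cmod_c0 S0 by (simp add: norm_mult power_mult_distrib)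
      have "Re ((ext_channel d (kraus d x) (proj \<psi>) *\<^sub>v phi_plus d) \<bullet>c phi_plus d)
        = (cmod c)\<^sup>2 * ((cmod (\<Sum>a<d. phi_plus d $ (a*d+a) * of_real (XX x a * XX x a)))\<^sup>2
        + (\<Sum>m\<in>{1..<d}. (cmod (phi_plus d $ (m*d)))\<^sup>2 * (ss x m * XX x m)\<^sup>2))"
        by (rule val_formula[OF psi hpsi pp_carrier])
      also have "\<dots> = (1 / SS d x) * ((SS d x)\<^sup>2 / d)" unfolding z s cs cn by simp
      also have "\<dots> = SS d x / d" using S0 by (simp add: power2_eq_square)
      finally show ?thesis .
    qed
    show "SS d x / d \<in> F" unfolding F_def
      by (intro CollectI exI[of _ "phi_plus d"] conjI) (simp_all add: ppv pp_me)
    fix v assume "v \<in> F"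
    then obtain \<Phi> where v: "v = Re ((ext_channel d (kraus d x) (proj \<psi>) *\<^sub>v \<Phi>) \<bullet>c \<Phi>)"
      and me: "max_entangled d \<Phi>" unfolding F_def by blast
    have Phi: "\<Phi> \<in> carrier_vec (d*d)" using me unfolding max_entangled_def by (intro carrier_vecI) blast
    have "v = (cmod c)\<^sup>2 * ((cmod (\<Sum>a<d. \<Phi> $ (a*d+a) * of_real (XX x a * XX x a)))\<^sup>2
        + (\<Sum>m\<in>{1..<d}. (cmod (\<Phi> $ (m*d)))\<^sup>2 * (ss x m * XX x m)\<^sup>2))"
      unfolding v by (rule val_formula[OF psi hpsi Phi])
    also have "\<dots> \<le> (1 / SS d x) * ((SS d x)\<^sup>2 / d)"
      unfolding cn using V_bound[OF me] S0 by (intro mult_left_mono) auto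
    finally have "v \<le> (1 / SS d x) * ((SS d x)\<^sup>2 / d)" .
    then show "v \<le> SS d x / d" using S0 by (simp add: power2_eq_square)
  qed
  then have part1: "lambda_max (ext_channel d (kraus d x) (proj (phi_plus d)))
           = singlet_fraction d (ext_channel d (kraus d x) (proj \<psi>))"
  proof -
    have "singlet_fraction d (ext_channel d (kraus d x) (proj \<psi>)) = Sup F"
      by (simp only: singlet_fraction_def F_def)
    then show ?thesis using lmaxK \<open>Sup F = SS d x / d\<close> by simp
  qed
  have part2: "\<not> max_entangled d \<psi>"
  proof
    assume me: "max_entangled d \<psi>"
    have r0: "(cmod c)\<^sup>2 * (XX x 0)\<^sup>2 = 1 / real d" using row_me[OF me, of 0] rowpsi[of 0] d0 by simp
    have r1: "(cmod c)\<^sup>2 * (XX x 1)\<^sup>2 = 1 / real d" using row_me[OF me, of 1] rowpsi[of 1] d2 by simp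
    have "(cmod c)\<^sup>2 * (x 1)\<^sup>2 = (cmod c)\<^sup>2" using r0 r1 by (simp add: XX_def)
    then have "(x 1)\<^sup>2 = 1" using cn S0 by simp
    moreover have "0 < x 1 \<and> x 1 < 1" using hx[of 1] d2 by simp
    moreover have "x 1 * x 1 < 1 * 1" using calculation(2) by (intro mult_strict_mono) auto
    ultimately show False by (simp add: power2_eq_square)
  qed
  show ?thesis using part1 part2 by simp
qed

end
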